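(* Let $T$ be a tree in which every element has at most countably many immediate successors. Then $T$ with the fine wedge topology is suborderable, i.e. homeomorphic to a subspace of a linearly ordered topological space.
   Context: A tree is a partially ordered set in which the set of predecessors of each element is well-ordered. $y$ is an immediate successor of $x$ if $x<y$ and there is no $z$ with $x<z<y$. For $t\in T$, $V_t=\{s\in T:s\ge t\}$. The fine wedge topology on $T$ has as subbase all sets $V_t$ and their complements $T\setminus V_t$. *)

theory Defs
  imports "HOL-Analysis.Analysis"
begin

definition predecessors :: "'a::order set \<Rightarrow> 'a \<Rightarrow> 'a set" where
  "predecessors T t = {s \<in> T. s < t}"

definition is_tree :: "'a::order set \<Rightarrow> bool" where
  "is_tree T \<longleftrightarrow> (\<forall>t\<in>T.
      (\<forall>x\<in>predecessors T t. \<forall>y\<in>predecessors T t. x \<le> y \<or> y \<le> x) \<and>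
      wf {(x, y). x \<in> predecessors T t \<and> y \<in> predecessors T t \<and> x < y})"

definition immediate_successors :: "'a::order set \<Rightarrow> 'a \<Rightarrow> 'a set" where
  "immediate_successors T x = {y \<in> T. x < y \<and> \<not> (\<exists>z\<in>T. x < z \<and> z < y)}"

definition wedge :: "'a::order set \<Rightarrow> 'a \<Rightarrow> 'a set" where
  "wedge T t = {s \<in> T. s \<ge> t}"

definition fine_wedge_topology :: "'a::order set \<Rightarrow> 'a topology" where
  "fine_wedge_topology T =
     topology_generated_by ((wedge T ` T) \<union> ((\<lambda>t. T - wedge T t) ` T))"

text \<open>The order topology on a linearly ordered set L (with linear order r,
  reflexive as in the library notion linear_order_on): subbase consists of L
  and the open rays.\<close>
definition order_topology_on :: "'b set \<Rightarrow> 'b rel \<Rightarrow> 'b topology" where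
  "order_topology_on L r = topology_generated_by
     ({L} \<union> {{x \<in> L. (a, x) \<in> r \<and> x \<noteq> a} | a. a \<in> L}
          \<union> {{x \<in> L. (x, a) \<in> r \<and> x \<noteq> a} | a. a \<in> L})"

definition suborderable_in :: "'b itself \<Rightarrow> 'a topology \<Rightarrow> bool" where
  "suborderable_in _ X \<longleftrightarrow> (\<exists>(L::'b set) r Y. linear_order_on L r \<and> Y \<subseteq> L \<and>
      X homeomorphic_space subtopology (order_topology_on L r) Y)"

end

theory Submission
  imports Defs
begin


locale ftree =
  fixes T :: "'a::order set" and W :: "'a rel"
  assumes tree: "is_tree T"
    and ctbl: "\<forall>t\<in>T. countable (immediate_successors T t)"
    and Wtot: "total_on UNIV W" and Wtrans: "trans W" and Wanti: "antisym W"
begin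

definition br :: "'a \<Rightarrow> 'a set" where "br x = {z\<in>T. z \<le> x}"

abbreviation pr :: "'a \<Rightarrow> 'a set" where "pr x \<equiv> predecessors T x"

abbreviation imm :: "'a \<Rightarrow> 'a set" where "imm p \<equiv> immediate_successors T p"

definition idx :: "'a \<Rightarrow> 'a \<Rightarrow> nat" where "idx p = to_nat_on (imm p)"

definition S :: "'a \<Rightarrow> 'a \<Rightarrow> bool" where
  "S a b \<longleftrightarrow> (\<exists>p\<in>T. a \<in> imm p \<and> b \<in> imm p \<and> idx p b < idx p a)
     \<or> ((\<forall>p\<in>T. a \<notin> imm p) \<and> (a, b) \<in> W \<and> a \<noteq> b)"

definition wit :: "'a \<Rightarrow> 'a \<Rightarrow> 'a \<Rightarrow> 'a \<Rightarrow> bool" where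
  "wit x y a b \<longleftrightarrow> a \<in> T \<and> b \<in> T \<and> a \<le> x \<and> b \<le> y \<and> pr a = pr b \<and> a \<noteq> b"

definition prec :: "'a \<Rightarrow> 'a \<Rightarrow> bool" where
  "prec x y \<longleftrightarrow> x < y \<or> (\<exists>a b. wit x y a b \<and> S a b)"

lemma le_comp:
  assumes "x \<in> T" "a \<in> T" "b \<in> T" "a \<le> x" "b \<le> x"
  shows "a \<le> b \<or> b \<le> a"
proof (cases "a = x \<or> b = x")
  case True then show ?thesis using assms by auto
next
  case False
  then have "a \<in> pr x" "b \<in> pr x" using assms by (auto simp: predecessors_def)
  then show ?thesis using tree assms(1) unfolding is_tree_def by blast
qed

lemma has_min:
  assumes "x \<in> T" "A \<subseteq> br x" "A \<noteq> {}"
  shows "\<exists>m\<in>A. \<forall>z\<in>A. m \<le> z"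
proof (cases "A \<inter> pr x = {}")
  case True
  then have "\<forall>z\<in>A. z = x" using assms by (auto simp: br_def predecessors_def order.order_iff_strict)
  then show ?thesis using assms(3) by auto
next
  case False
  let ?R = "{(u, v). u \<in> pr x \<and> v \<in> pr x \<and> u < v}"
  have wf: "wf ?R" using tree assms(1) unfolding is_tree_def by blast
  obtain u where "u \<in> A \<inter> pr x" using False by blast
  from wfE_min[OF wf this] obtain m where m: "m \<in> A \<inter> pr x"
    and mmin: "\<And>y. (y, m) \<in> ?R \<Longrightarrow> y \<notin> A \<inter> pr x" by blast
  have "\<forall>z\<in>A. m \<le> z"
  proof
    fix z assume z: "z \<in> A"
    show "m \<le> z"
    proof (cases "z \<in> pr x")
      case True
      have "m \<le> z \<or> z \<le> m" using le_comp[OF assms(1), of m z] m True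
        by (auto simp: predecessors_def)
      moreover have "\<not> z < m" using mmin[of z] True z m by auto
      ultimately show ?thesis by auto
    next
      case False
      then have "z = x" using z assms(2) by (auto simp: br_def predecessors_def)
      then show ?thesis using m by (auto simp: predecessors_def)
    qed
  qed
  then show ?thesis using m by blast
qed

lemma imm_iff:
  assumes "p \<in> T"
  shows "a \<in> imm p \<longleftrightarrow> a \<in> T \<and> pr a = br p"
proof
  assume a: "a \<in> imm p"
  then have aT: "a \<in> T" and pa: "p < a" and no: "\<not>(\<exists>z\<in>T. p < z \<and> z < a)"
    by (auto simp: immediate_successors_def)
  have "pr a = br p"
  proof (auto simp: predecessors_def br_def)
    fix z assume "z \<in> T" "z < a"
    then have "z \<le> p \<or> p \<le> z" using le_comp[OF aT, of z p] assms pa by auto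
    then show "z \<le> p" using no \<open>z < a\<close> \<open>z \<in> T\<close> by (auto simp: order.order_iff_strict)
  next
    fix z assume "z \<le> p" then show "z < a" using pa by auto
  qed
  then show "a \<in> T \<and> pr a = br p" using aT by auto
next
  assume a: "a \<in> T \<and> pr a = br p"
  then have "p \<in> pr a" using assms by (auto simp: br_def)
  then have "p < a" by (auto simp: predecessors_def)
  moreover have "\<not>(\<exists>z\<in>T. p < z \<and> z < a)"
  proof
    assume "\<exists>z\<in>T. p < z \<and> z < a"
    then obtain z where "z \<in> T" "p < z" "z < a" by blast
    then have "z \<in> br p" using a by (auto simp: predecessors_def)
    then show False using \<open>p < z\<close> by (auto simp: br_def)
  qed
  ultimately show "a \<in> imm p" using a by (auto simp: immediate_successors_def)
qed

lemma br_inj: "p \<in> T \<Longrightarrow> q \<in> T \<Longrightarrow> br p = br q \<Longrightarrow> p = q"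
  unfolding br_def by (metis (mono_tags, lifting) mem_Collect_eq order.eq_iff order.refl)

lemma imm_same:
  assumes "p \<in> T" "a \<in> imm p" "b \<in> T" "pr a = pr b"
  shows "b \<in> imm p"
  using assms imm_iff by auto

lemma imm_unique:
  assumes "p \<in> T" "q \<in> T" "a \<in> imm p" "a \<in> imm q"
  shows "p = q"
  using assms imm_iff br_inj by metis

lemma S_irrefl: "\<not> S a a"
  unfolding S_def by auto

lemma S_total:
  assumes "a \<in> T" "b \<in> T" "pr a = pr b" "a \<noteq> b"
  shows "S a b \<or> S b a"
proof (cases "\<exists>p\<in>T. a \<in> imm p")
  case True
  then obtain p where p: "p \<in> T" "a \<in> imm p" by blast
  then have b: "b \<in> imm p" using imm_same assms by blast
  have "countable (imm p)" using ctbl p by auto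
  then have "idx p a \<noteq> idx p b" using p b assms(4) unfolding idx_def by simp
  then show ?thesis unfolding S_def using p b by (meson linorder_neqE_nat)
next
  case False
  then have "\<forall>p\<in>T. b \<notin> imm p" using imm_same assms by metis
  moreover have "(a, b) \<in> W \<or> (b, a) \<in> W" using Wtot assms(4) by (auto simp: total_on_def)
  ultimately show ?thesis using False assms(4) unfolding S_def by blast
qed

lemma S_trans:
  assumes "a \<in> T" "b \<in> T" "c \<in> T" "pr a = pr b" "pr b = pr c" "S a b" "S b c"
  shows "S a c"
proof (cases "\<exists>p\<in>T. a \<in> imm p")
  case True
  then obtain p where p: "p \<in> T" "a \<in> imm p" by blast
  then have b: "b \<in> imm p" and c: "c \<in> imm p" using imm_same assms by (metis)+
  have ab: "idx p b < idx p a" using assms(6) p b imm_unique unfolding S_def by blast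
  have bc: "idx p c < idx p b" using assms(7) b c imm_unique p unfolding S_def by blast
  show ?thesis unfolding S_def using p c ab bc by auto
next
  case False
  then have nb: "\<forall>p\<in>T. b \<notin> imm p" using imm_same assms by metis
  have ab: "(a, b) \<in> W" using assms(6) False unfolding S_def by blast
  have bc: "(b, c) \<in> W" "b \<noteq> c" using assms(7) nb unfolding S_def by blast+
  have "a \<noteq> b" using assms(6) S_irrefl by auto
  have "(a, c) \<in> W" using ab bc Wtrans by (meson transD)
  moreover have "a \<noteq> c" using ab bc Wanti \<open>a \<noteq> b\<close> by (metis antisymD)
  ultimately show ?thesis using False unfolding S_def by blast
qed

end


context ftree begin

lemma pr_eq_comp:
  assumes "a \<in> T" "b \<in> T" "pr a = pr b" "a \<le> b \<or> b \<le> a"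
  shows "a = b"
proof (rule ccontr)
  assume "a \<noteq> b"
  then have "a < b \<or> b < a" using assms(4) by auto
  then show False
  proof
    assume "a < b" then have "a \<in> pr b" using assms by (auto simp: predecessors_def)
    then show False using assms(3) by (auto simp: predecessors_def)
  next
    assume "b < a" then have "b \<in> pr a" using assms by (auto simp: predecessors_def)
    then show False using assms(3) by (auto simp: predecessors_def)
  qed
qed

lemma wit_sym: "wit x y a b \<Longrightarrow> wit y x b a"
  unfolding wit_def by auto

lemma wit_incomp:
  assumes "wit x y a b" "x \<in> T" "y \<in> T"
  shows "\<not> x \<le> y"
proof
  assume "x \<le> y"
  then have "a \<le> y" "b \<le> y" "a \<in> T" "b \<in> T" "pr a = pr b" "a \<noteq> b"
    using assms unfolding wit_def by auto
  then show False using le_comp[OF assms(3)] pr_eq_comp by metis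
qed

lemma wit_unique1:
  assumes "wit x y a b" "wit x y a' b'" "x \<in> T" "y \<in> T"
  shows "a = a'"
proof -
  have A: False if "wit x y a b" "wit x y a' b'" "a < a'" for a b a' b'
  proof -
    have "a \<in> pr a'" using that unfolding wit_def predecessors_def by auto
    then have "a \<in> pr b'" using that unfolding wit_def by auto
    then have "a \<le> y" using that unfolding wit_def predecessors_def by auto
    then have "a \<le> b \<or> b \<le> a" using le_comp[OF assms(4), of a b] that unfolding wit_def by auto
    then show False using pr_eq_comp that unfolding wit_def by metis
  qed
  have "a \<le> a' \<or> a' \<le> a" using le_comp[OF assms(3), of a a'] assms unfolding wit_def by auto
  moreover have "\<not> a < a'" using A[OF assms(1,2)] by blast
  moreover have "\<not> a' < a" using A[OF assms(2,1)] by blast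
  ultimately show ?thesis using order.order_iff_strict by blast
qed

lemma wit_unique:
  assumes "wit x y a b" "wit x y a' b'" "x \<in> T" "y \<in> T"
  shows "a = a' \<and> b = b'"
  using wit_unique1[OF assms] wit_unique1[OF wit_sym[OF assms(1)] wit_sym[OF assms(2)] assms(4,3)]
  by auto

lemma wit_exists:
  assumes "x \<in> T" "y \<in> T" "\<not> x \<le> y" "\<not> y \<le> x"
  shows "\<exists>a b. wit x y a b"
proof -
  have "br x - br y \<noteq> {}" using assms by (auto simp: br_def)
  then obtain a where a: "a \<in> br x - br y" and amin: "\<forall>z\<in>br x - br y. a \<le> z"
    using has_min[OF assms(1), of "br x - br y"] by auto
  have "br y - br x \<noteq> {}" using assms by (auto simp: br_def)
  then obtain b where b: "b \<in> br y - br x" and bmin: "\<forall>z\<in>br y - br x. b \<le> z"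
    using has_min[OF assms(2), of "br y - br x"] by auto
  have X: "z < b" if "z \<in> T" "z < a" for z
  proof -
    have "z \<in> br x" using a that by (auto simp: br_def)
    then have "z \<in> br y" using amin that by force
    then have zy: "z \<le> y" by (auto simp: br_def)
    have "b \<le> z \<or> z \<le> b" using le_comp[OF assms(2), of b z] b zy that by (auto simp: br_def)
    moreover have "\<not> b \<le> z" using b a that by (auto simp: br_def)
    moreover have "z \<noteq> b" using b \<open>z \<in> br x\<close> by auto
    ultimately show ?thesis by auto
  qed
  have Y: "z < a" if "z \<in> T" "z < b" for z
  proof -
    have "z \<in> br y" using b that by (auto simp: br_def)
    then have "z \<in> br x" using bmin that by force
    then have zx: "z \<le> x" by (auto simp: br_def)
    have "a \<le> z \<or> z \<le> a" using le_comp[OF assms(1), of a z] a zx that by (auto simp: br_def)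
    moreover have "\<not> a \<le> z" using b a that by (auto simp: br_def)
    moreover have "z \<noteq> a" using a \<open>z \<in> br y\<close> by auto
    ultimately show ?thesis by auto
  qed
  have "pr a = pr b" using X Y by (auto simp: predecessors_def)
  then have "wit x y a b" using a b by (auto simp: wit_def br_def)
  then show ?thesis by blast
qed

lemma wit_mono: "wit x y a b \<Longrightarrow> x \<le> x' \<Longrightarrow> wit x' y a b"
  unfolding wit_def by auto

lemma prec_irrefl: "x \<in> T \<Longrightarrow> \<not> prec x x"
  unfolding prec_def using wit_incomp by auto

lemma prec_asym:
  assumes "x \<in> T" "y \<in> T" "prec x y" shows "\<not> prec y x"
proof
  assume yx: "prec y x"
  show False
  proof (cases "x < y")
    case True
    then have "\<not> y < x" by auto
    then obtain c d where cd: "wit y x c d" using yx unfolding prec_def by auto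
    show False using wit_incomp[OF wit_sym[OF cd] assms(1,2)] True by auto
  next
    case False
    then obtain a b where ab: "wit x y a b" "S a b" using assms(3) unfolding prec_def by auto
    then have "\<not> y < x" using wit_incomp[OF wit_sym[OF ab(1)] assms(2,1)] by auto
    then obtain c d where cd: "wit y x c d" "S c d" using yx unfolding prec_def by auto
    have "b = c \<and> a = d" using wit_unique[OF wit_sym[OF ab(1)] cd(1) assms(2,1)] by auto
    then show False using ab cd S_trans S_irrefl unfolding wit_def by metis
  qed
qed

lemma prec_up:
  assumes "prec a x" "x \<le> y" shows "prec a y"
proof (cases "a < x")
  case True then show ?thesis using assms(2) unfolding prec_def by auto
next
  case False
  then obtain c d where "wit a x c d" "S c d" using assms(1) unfolding prec_def by auto
  then have "wit a y c d" "S c d" using assms(2) unfolding wit_def by auto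
  then show ?thesis unfolding prec_def by auto
qed

lemma pr_transfer:
  assumes "u \<in> T" "u < b" "pr b = pr c" shows "u < c"
proof -
  have "u \<in> pr b" using assms(1,2) by (simp add: predecessors_def)
  then have "u \<in> pr c" using assms(3) by simp
  then show ?thesis by (simp add: predecessors_def)
qed

lemma prec_trans:
  assumes "x \<in> T" "y \<in> T" "z \<in> T" "prec x y" "prec y z" shows "prec x z"
proof (cases "x < y")
  case xy: True
  show ?thesis
  proof (cases "y < z")
    case True then show ?thesis using xy unfolding prec_def by auto
  next
    case False
    then obtain b c where bc: "wit y z b c" "S b c" using assms(5) unfolding prec_def by auto
    have "x \<le> b \<or> b \<le> x" using le_comp[OF assms(2), of x b] xy bc assms unfolding wit_def by auto
    then show ?thesis
    proof
      assume "b \<le> x"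
      then have "wit x z b c" using bc unfolding wit_def using assms by auto
      then show ?thesis using bc unfolding prec_def by auto
    next
      assume "x \<le> b"
      show ?thesis
      proof (cases "x = b")
        case True
        then have "wit x z b c" using bc unfolding wit_def using assms by auto
        then show ?thesis using bc unfolding prec_def by auto
      next
        case False
      then have "x < b" using \<open>x \<le> b\<close> by auto
      then have "x < c" using pr_transfer[of x b c] bc assms unfolding wit_def by auto
      then have "x < z" using bc unfolding wit_def by auto
      then show ?thesis unfolding prec_def by auto
      qed
    qed
  qed
next
  case False
  then obtain a b where ab: "wit x y a b" "S a b" using assms(4) unfolding prec_def by auto
  show ?thesis
  proof (cases "y < z")
    case True
    then have "wit x z a b" using ab unfolding wit_def by auto
    then show ?thesis using ab unfolding prec_def by auto
  next
    case False
    then obtain b' c where bc: "wit y z b' c" "S b' c" using assms(5) unfolding prec_def by auto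
    have "b \<le> b' \<or> b' \<le> b" using le_comp[OF assms(2), of b b'] ab bc unfolding wit_def by auto
    moreover
    {
      assume "b = b'"
      then have "S a c" using S_trans[of a b c] ab bc unfolding wit_def by auto
      moreover have "a \<noteq> c" using \<open>S a c\<close> S_irrefl by metis
      ultimately have "wit x z a c \<and> S a c" using ab bc \<open>b = b'\<close> unfolding wit_def by auto
      then have ?thesis unfolding prec_def by auto
    }
    moreover
    {
      assume "b < b'"
      then have "b < c" using pr_transfer[of b b' c] ab bc unfolding wit_def by auto
      then have "b \<le> z" using bc unfolding wit_def by auto
      then have "wit x z a b" using ab unfolding wit_def by auto
      then have ?thesis using ab unfolding prec_def by auto
    }
    moreover
    {
      assume "b' < b"
      then have "b' < a" using pr_transfer[of b' b a] ab bc unfolding wit_def by auto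
      then have "b' \<le> x" using ab unfolding wit_def by auto
      then have "wit x z b' c" using bc unfolding wit_def by auto
      then have ?thesis using bc unfolding prec_def by auto
    }
    ultimately show ?thesis using order.order_iff_strict by blast
  qed
qed

lemma prec_total:
  assumes "x \<in> T" "y \<in> T" "x \<noteq> y" shows "prec x y \<or> prec y x"
proof (cases "x \<le> y \<or> y \<le> x")
  case True then show ?thesis using assms unfolding prec_def using order.order_iff_strict by blast
next
  case False
  then obtain a b where ab: "wit x y a b" using wit_exists assms by blast
  then have "S a b \<or> S b a" using S_total unfolding wit_def by auto
  then show ?thesis using ab wit_sym unfolding prec_def by blast
qed

lemma convex:
  assumes "t \<in> T" "x \<in> T" "w \<in> T" "t \<le> w" "prec t x \<or> t = x" "prec x w \<or> x = w"
  shows "t \<le> x"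
proof (cases "t = x")
  case True then show ?thesis by simp
next
  case tx: False
  show ?thesis
  proof (cases "x = w")
    case True then show ?thesis using assms by simp
  next
    case False
    then have pxw: "prec x w" and ptx: "prec t x" using assms tx by auto
    show ?thesis
    proof (cases "x < w")
      case True
      then have "x \<le> t \<or> t \<le> x" using le_comp[OF assms(3), of x t] assms by auto
      moreover have "\<not> x < t" using ptx prec_asym[OF assms(1,2)] unfolding prec_def by auto
      ultimately show ?thesis using tx order.order_iff_strict by blast
    next
      case False
      show ?thesis
      proof (cases "t < x")
        case True then show ?thesis by simp
      next
        case False
        then obtain a b where ab: "wit t x a b" "S a b" using ptx unfolding prec_def by auto
        then have "prec w x" unfolding prec_def using wit_mono[OF ab(1) assms(4)] by auto
        then show ?thesis using prec_asym[OF assms(2,3) pxw] by simp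
      qed
    qed
  qed
qed

end


context ftree begin

abbreviation FW where "FW \<equiv> fine_wedge_topology T"

lemma topspace_FW: "topspace FW = T"
  unfolding fine_wedge_topology_def topology_generated_by_topspace
  by (auto simp: wedge_def)

lemma open_wedge: "t \<in> T \<Longrightarrow> openin FW (wedge T t)"
  unfolding fine_wedge_topology_def by (rule topology_generated_by_Basis) auto

lemma open_cowedge: "t \<in> T \<Longrightarrow> openin FW (T - wedge T t)"
  unfolding fine_wedge_topology_def by (rule topology_generated_by_Basis) auto

lemma child_below:
  assumes "x \<in> T" "y \<in> T" "x < y"
  shows "\<exists>c\<in>imm x. c \<le> y"
proof -
  let ?A = "{z \<in> T. x < z \<and> z \<le> y}"
  have s1: "?A \<subseteq> br y" by (auto simp: br_def)
  have s2: "?A \<noteq> {}" using assms by auto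
  obtain c where c: "c \<in> ?A" and cmin: "\<forall>z\<in>?A. c \<le> z"
    using has_min[OF assms(2) s1 s2] by blast
  have "c \<in> imm x"
    unfolding immediate_successors_def
  proof (intro CollectI conjI)
    show "c \<in> T" "x < c" using c by auto
    show "\<not> (\<exists>z\<in>T. x < z \<and> z < c)"
    proof
      assume "\<exists>z\<in>T. x < z \<and> z < c"
      then obtain z where z: "z \<in> T" "x < z" "z < c" by blast
      then have "z \<in> ?A" using c by auto
      then have "c \<le> z" using cmin by blast
      then show False using \<open>z < c\<close> by simp
    qed
  qed
  then show ?thesis using c by auto
qed

lemma open_singleton:
  assumes "a \<in> T" "finite (imm a)"
  shows "openin FW {a}"
proof -
  have eq: "{a} = wedge T a \<inter> ((\<Inter>d\<in>imm a. T - wedge T d) \<inter> topspace FW)"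
  proof
    have "a \<in> T - wedge T d" if "d \<in> imm a" for d
      using that assms(1) by (auto simp: wedge_def immediate_successors_def)
    moreover have "a \<in> wedge T a" "a \<in> topspace FW" using assms(1) by (auto simp: wedge_def topspace_FW)
    ultimately show "{a} \<subseteq> wedge T a \<inter> ((\<Inter>d\<in>imm a. T - wedge T d) \<inter> topspace FW)"
      by blast
    show "wedge T a \<inter> ((\<Inter>d\<in>imm a. T - wedge T d) \<inter> topspace FW) \<subseteq> {a}"
    proof
      fix y assume y: "y \<in> wedge T a \<inter> ((\<Inter>d\<in>imm a. T - wedge T d) \<inter> topspace FW)"
      then have yT: "y \<in> T" and ay: "a \<le> y" by (auto simp: wedge_def)
      show "y \<in> {a}"
      proof (rule ccontr)
        assume "y \<notin> {a}"
        then have "a < y" using ay by auto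
        then obtain d where d: "d \<in> imm a" "d \<le> y" using child_below assms yT by blast
        then have "y \<in> T - wedge T d" using y by blast
        then show False using d yT by (auto simp: wedge_def)
      qed
    qed
  qed
  have "openin FW ((\<Inter>d\<in>imm a. T - wedge T d) \<inter> topspace FW)"
    apply (rule openin_INT[OF assms(2)])
    apply (rule open_cowedge) by (auto simp: immediate_successors_def)
  then show ?thesis using eq open_wedge[OF assms(1)] openin_Int by metis
qed

lemma open_above: "openin FW {x\<in>T. prec a x}"
proof -
  have "{x\<in>T. prec a x} = \<Union>(wedge T ` {x\<in>T. prec a x})"
    using prec_up by (auto simp: wedge_def)
  moreover have "openin FW (\<Union>(wedge T ` {x\<in>T. prec a x}))"
    by (rule openin_Union) (use open_wedge in auto)
  ultimately show ?thesis by simp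
qed

lemma open_above_eq: "a \<in> T \<Longrightarrow> openin FW {x\<in>T. prec a x \<or> a = x}"
proof -
  assume aT: "a \<in> T"
  have "{x\<in>T. prec a x \<or> a = x} = \<Union>(wedge T ` {x\<in>T. prec a x \<or> a = x})"
  proof
    show "{x\<in>T. prec a x \<or> a = x} \<subseteq> \<Union>(wedge T ` {x\<in>T. prec a x \<or> a = x})"
      by (auto simp: wedge_def)
    show "\<Union>(wedge T ` {x\<in>T. prec a x \<or> a = x}) \<subseteq> {x\<in>T. prec a x \<or> a = x}"
    proof
      fix y assume "y \<in> \<Union>(wedge T ` {x\<in>T. prec a x \<or> a = x})"
      then obtain x where x: "x \<in> T" "prec a x \<or> a = x" "y \<in> T" "x \<le> y"
        by (auto simp: wedge_def)
      show "y \<in> {x\<in>T. prec a x \<or> a = x}"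
      proof (cases "x = y")
        case True then show ?thesis using x by auto
      next
        case False
        then have "x < y" using x by auto
        show ?thesis
        proof (cases "a = x")
          case True then show ?thesis using \<open>x < y\<close> x unfolding prec_def by auto
        next
          case False then show ?thesis using prec_up[of a x y] x by auto
        qed
      qed
    qed
  qed
  moreover have "openin FW (\<Union>(wedge T ` {x\<in>T. prec a x \<or> a = x}))"
    by (rule openin_Union) (use open_wedge in auto)
  ultimately show ?thesis by simp
qed

lemma open_below:
  assumes aT: "a \<in> T"
  shows "openin FW {x\<in>T. prec x a}"
proof (subst openin_subopen, intro ballI)
  fix x assume "x \<in> {x\<in>T. prec x a}"
  then have xT: "x \<in> T" and xa: "prec x a" by auto
  show "\<exists>N. openin FW N \<and> x \<in> N \<and> N \<subseteq> {x\<in>T. prec x a}"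
  proof (cases "x < a")
    case False
    then obtain p q where pq: "wit x a p q" "S p q" using xa unfolding prec_def by auto
    have "wedge T x \<subseteq> {x\<in>T. prec x a}"
    proof
      fix y assume "y \<in> wedge T x"
      then have "y \<in> T" "x \<le> y" by (auto simp: wedge_def)
      then have "wit y a p q" using wit_mono pq by blast
      then show "y \<in> {x\<in>T. prec x a}" using pq \<open>y \<in> T\<close> unfolding prec_def by auto
    qed
    moreover have "x \<in> wedge T x" using xT by (auto simp: wedge_def)
    ultimately show ?thesis using open_wedge[OF xT] by blast
  next
    case True
    then obtain c where c: "c \<in> imm x" "c \<le> a" using child_below xT aT by blast
    define F where "F = {d \<in> imm x. idx x d \<le> idx x c}"
    have ctx: "countable (imm x)" using ctbl xT by auto
    have inj: "inj_on (idx x) (imm x)" unfolding idx_def using ctx by auto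
    have "finite F"
    proof (rule inj_on_finite[of "idx x" F "{..idx x c}"])
      show "inj_on (idx x) F" using inj unfolding F_def by (rule inj_on_subset) auto
    qed (auto simp: F_def)
    define N where "N = wedge T x \<inter> ((\<Inter>d\<in>F. T - wedge T d) \<inter> topspace FW)"
    have "openin FW ((\<Inter>d\<in>F. T - wedge T d) \<inter> topspace FW)"
      apply (rule openin_INT[OF \<open>finite F\<close>])
      apply (rule open_cowedge) by (auto simp: F_def immediate_successors_def)
    then have oN: "openin FW N" unfolding N_def using open_wedge[OF xT] openin_Int by metis
    have xN: "x \<in> N" unfolding N_def using xT
      by (auto simp: wedge_def topspace_FW F_def immediate_successors_def)
    have "N \<subseteq> {x\<in>T. prec x a}"
    proof
      fix y assume y: "y \<in> N"
      then have yT: "y \<in> T" and xy: "x \<le> y" by (auto simp: N_def wedge_def)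
      show "y \<in> {x\<in>T. prec x a}"
      proof (cases "x = y")
        case True then show ?thesis using xa xT by auto
      next
        case False
        then have "x < y" using xy by auto
        then obtain d where d: "d \<in> imm x" "d \<le> y" using child_below xT yT by blast
        have "d \<notin> F"
        proof
          assume "d \<in> F"
          then have "y \<in> T - wedge T d" using y unfolding N_def by blast
          then show False using d yT by (auto simp: wedge_def)
        qed
        then have lt: "idx x c < idx x d" using d unfolding F_def by auto
        have cT: "c \<in> T" and dT: "d \<in> T" using c d by (auto simp: immediate_successors_def)
        have "pr d = pr c" using imm_iff[OF xT] c d by auto
        moreover have "d \<noteq> c" using lt by auto
        ultimately have "wit y a d c" using cT dT c d unfolding wit_def by auto
        moreover have "S d c" unfolding S_def using xT c d lt by blast
        ultimately show ?thesis using yT unfolding prec_def by auto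
      qed
    qed
    then show ?thesis using oN xN by blast
  qed
qed

lemma open_below_eq:
  assumes "a \<in> T" "finite (imm a)"
  shows "openin FW {x\<in>T. prec x a \<or> x = a}"
proof -
  have "{x\<in>T. prec x a \<or> x = a} = {x\<in>T. prec x a} \<union> {a}" using assms by auto
  then show ?thesis using open_below[OF assms(1)] open_singleton[OF assms] by (metis openin_Un)
qed

end


context ftree begin

definition LL :: "('a \<times> int) set" where
  "LL = {(x, i). x \<in> T \<and> (i = -1 \<or> i = 0 \<or> (i = 1 \<and> finite (imm x)))}"

definition lt :: "'a \<times> int \<Rightarrow> 'a \<times> int \<Rightarrow> bool" where
  "lt u v \<longleftrightarrow> prec (fst u) (fst v) \<or> (fst u = fst v \<and> snd u < snd v)"

definition R :: "('a \<times> int) rel" where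
  "R = {(u, v). u \<in> LL \<and> v \<in> LL \<and> (lt u v \<or> u = v)}"

definition YY :: "('a \<times> int) set" where "YY = (\<lambda>x. (x, 0)) ` T"

abbreviation OT where "OT \<equiv> order_topology_on LL R"

lemma LL_fst: "u \<in> LL \<Longrightarrow> fst u \<in> T"
  unfolding LL_def by auto

lemma lt_irrefl: "u \<in> LL \<Longrightarrow> \<not> lt u u"
  unfolding lt_def using prec_irrefl LL_fst by auto

lemma lt_trans:
  assumes "u \<in> LL" "v \<in> LL" "w \<in> LL" "lt u v" "lt v w" shows "lt u w"
proof -
  have T3: "fst u \<in> T" "fst v \<in> T" "fst w \<in> T" using assms LL_fst by auto
  show ?thesis
  proof (cases "prec (fst u) (fst v)")
    case True
    show ?thesis
    proof (cases "prec (fst v) (fst w)")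
      case True
      then show ?thesis using prec_trans[OF T3] \<open>prec (fst u) (fst v)\<close> unfolding lt_def by blast
    next
      case False
      then have "fst v = fst w" using assms(5) unfolding lt_def by auto
      then show ?thesis using \<open>prec (fst u) (fst v)\<close> unfolding lt_def by auto
    qed
  next
    case False
    then have uv: "fst u = fst v" "snd u < snd v" using assms(4) unfolding lt_def by auto
    then show ?thesis using assms(5) unfolding lt_def by auto
  qed
qed

lemma lt_asym:
  assumes "u \<in> LL" "v \<in> LL" "lt u v" shows "\<not> lt v u"
  using lt_trans[OF assms(1,2,1) assms(3)] lt_irrefl[OF assms(1)] by blast

lemma lt_total:
  assumes "u \<in> LL" "v \<in> LL" "u \<noteq> v" shows "lt u v \<or> lt v u"
proof (cases "fst u = fst v")
  case True
  then have "snd u \<noteq> snd v" using assms(3) by (simp add: prod_eq_iff)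
  then show ?thesis using True unfolding lt_def by auto
next
  case False
  then show ?thesis using prec_total[OF LL_fst[OF assms(1)] LL_fst[OF assms(2)]] unfolding lt_def by auto
qed

lemma linear: "linear_order_on LL R"
  unfolding linear_order_on_def partial_order_on_def preorder_on_def
proof (intro conjI)
  show "R \<subseteq> LL \<times> LL" unfolding R_def by auto
  show "refl_on LL R" unfolding refl_on_def R_def by auto
  show "trans R" unfolding trans_def R_def using lt_trans by blast
  show "antisym R" unfolding antisym_def R_def using lt_asym by blast
  show "total_on LL R" unfolding total_on_def R_def using lt_total by blast
qed

lemma R_lt:
  assumes "u \<in> LL" "v \<in> LL" shows "((u, v) \<in> R \<and> v \<noteq> u) \<longleftrightarrow> lt u v"
proof
  assume "(u, v) \<in> R \<and> v \<noteq> u" then show "lt u v" unfolding R_def by auto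
next
  assume l: "lt u v"
  then have "v \<noteq> u" using lt_irrefl[OF assms(1)] by metis
  then show "(u, v) \<in> R \<and> v \<noteq> u" using l assms unfolding R_def by auto
qed

lemma ray_above_open:
  assumes "a \<in> LL" shows "openin OT {u\<in>LL. lt a u}"
proof -
  have "{u\<in>LL. lt a u} = {x \<in> LL. (a, x) \<in> R \<and> x \<noteq> a}" using R_lt assms by blast
  then show ?thesis unfolding order_topology_on_def
    by (intro topology_generated_by_Basis) (use assms in blast)
qed

lemma ray_below_open:
  assumes "a \<in> LL" shows "openin OT {u\<in>LL. lt u a}"
proof -
  have "{u\<in>LL. lt u a} = {x \<in> LL. (x, a) \<in> R \<and> x \<noteq> a}" using R_lt assms by blast
  then show ?thesis unfolding order_topology_on_def
    by (intro topology_generated_by_Basis) (use assms in blast)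
qed

lemma topspace_OT: "topspace OT = LL"
  unfolding order_topology_on_def topology_generated_by_topspace by auto

lemma YY_LL: "YY \<subseteq> LL"
  unfolding YY_def LL_def by auto

lemma Tpt_LL: "x \<in> T \<Longrightarrow> (x, i) \<in> LL \<longleftrightarrow> (i = -1 \<or> i = 0 \<or> (i = 1 \<and> finite (imm x)))"
  unfolding LL_def by auto

lemma cont_f: "continuous_map FW OT (\<lambda>x. (x, 0))"
  unfolding order_topology_on_def
proof (rule continuous_on_generated_topo)
  show "(\<lambda>x. (x, 0::int)) ` topspace FW \<subseteq> \<Union>({LL} \<union> {{x \<in> LL. (a, x) \<in> R \<and> x \<noteq> a} |a. a \<in> LL} \<union>
             {{x \<in> LL. (x, a) \<in> R \<and> x \<noteq> a} |a. a \<in> LL})"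
    using topspace_FW Tpt_LL by auto
next
  fix U assume U: "U \<in> {LL} \<union> {{x \<in> LL. (a, x) \<in> R \<and> x \<noteq> a} |a. a \<in> LL} \<union>
             {{x \<in> LL. (x, a) \<in> R \<and> x \<noteq> a} |a. a \<in> LL}"
  show "openin FW ((\<lambda>x. (x, 0::int)) -` U \<inter> topspace FW)"
  proof (cases "U = LL")
    case True
    have "(\<lambda>x. (x, 0::int)) -` U \<inter> topspace FW = topspace FW"
      using True topspace_FW Tpt_LL by auto
    then show ?thesis by simp
  next
    case False
    then consider a where "a \<in> LL" "U = {x \<in> LL. (a, x) \<in> R \<and> x \<noteq> a}"
      | a where "a \<in> LL" "U = {x \<in> LL. (x, a) \<in> R \<and> x \<noteq> a}" using U by blast
    then show ?thesis
    proof cases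
      case 1
      then have U': "U = {u\<in>LL. lt a u}" using R_lt[OF 1(1)] by blast
      obtain p i where a: "a = (p, i)" by fastforce
      have pT: "p \<in> T" using 1 a LL_fst by auto
      show ?thesis
      proof (cases "i < 0")
        case True
        have "(\<lambda>x. (x, 0::int)) -` U \<inter> topspace FW = {x\<in>T. prec p x \<or> p = x}"
          using True U' a topspace_FW Tpt_LL unfolding lt_def by auto
        then show ?thesis using open_above_eq[OF pT] by simp
      next
        case False
        have "(\<lambda>x. (x, 0::int)) -` U \<inter> topspace FW = {x\<in>T. prec p x}"
          using False U' a topspace_FW Tpt_LL unfolding lt_def by auto
        then show ?thesis using open_above by simp
      qed
    next
      case 2
      then have U': "U = {u\<in>LL. lt u a}" using R_lt[OF _ 2(1)] by blast
      obtain p i where a: "a = (p, i)" by fastforce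
      have pT: "p \<in> T" using 2 a LL_fst by auto
      show ?thesis
      proof (cases "0 < i")
        case True
        then have fin: "finite (imm p)" using 2 a Tpt_LL[OF pT] by auto
        have "(\<lambda>x. (x, 0::int)) -` U \<inter> topspace FW = {x\<in>T. prec x p \<or> x = p}"
          using True U' a topspace_FW Tpt_LL unfolding lt_def by auto
        then show ?thesis using open_below_eq[OF pT fin] by simp
      next
        case False
        have "(\<lambda>x. (x, 0::int)) -` U \<inter> topspace FW = {x\<in>T. prec x p}"
          using False U' a topspace_FW Tpt_LL unfolding lt_def by auto
        then show ?thesis using open_below[OF pT] by simp
      qed
    qed
  qed
qed

end


context ftree begin

lemma topspace_sub: "topspace (subtopology OT YY) = YY"
  using topspace_OT YY_LL by auto

lemma YY_elem: "u \<in> YY \<Longrightarrow> u = (fst u, 0) \<and> fst u \<in> T"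
  unfolding YY_def by auto

lemma open_pre_wedge:
  assumes tT: "t \<in> T"
  shows "openin (subtopology OT YY) (fst -` wedge T t \<inter> YY)"
proof -
  define V1 where "V1 = {u\<in>LL. lt (t, -1) u}"
  define V2 where "V2 = \<Union>{{u\<in>LL. lt u w} | w. w \<in> LL \<and> fst w \<in> wedge T t}"
  have t1: "(t, -1) \<in> LL" using tT Tpt_LL by auto
  have o1: "openin OT V1" unfolding V1_def by (rule ray_above_open[OF t1])
  have o2: "openin OT V2" unfolding V2_def
    by (rule openin_Union) (use ray_below_open in blast)
  have eq: "fst -` wedge T t \<inter> YY = (V1 \<inter> V2) \<inter> YY"
  proof (intro set_eqI iffI)
    fix u assume u: "u \<in> fst -` wedge T t \<inter> YY"
    then obtain x where ux: "u = (x, 0)" and xT: "x \<in> T" using YY_elem by blast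
    have tx: "t \<le> x" using u ux by (auto simp: wedge_def)
    have uL: "u \<in> LL" using u YY_LL by auto
    have "prec t x \<or> t = x" using tx unfolding prec_def using order.order_iff_strict by blast
    then have "u \<in> V1" unfolding V1_def lt_def using ux uL by auto
    moreover have "u \<in> V2"
    proof (cases "imm x = {}")
      case True
      then have w: "(x, 1) \<in> LL" using Tpt_LL xT by auto
      have "lt u (x, 1)" unfolding lt_def ux by simp
      then show ?thesis unfolding V2_def using w uL xT tx by (auto simp: wedge_def)
    next
      case False
      then obtain c where c: "c \<in> imm x" by blast
      then have cT: "c \<in> T" and xc: "x < c" by (auto simp: immediate_successors_def)
      have w: "(c, 0) \<in> LL" using Tpt_LL cT by auto
      have "lt u (c, 0)" unfolding lt_def prec_def ux using xc by simp
      moreover have "c \<in> wedge T t" using cT tx xc by (auto simp: wedge_def)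
      ultimately show ?thesis unfolding V2_def using w uL by auto
    qed
    ultimately show "u \<in> (V1 \<inter> V2) \<inter> YY" using u by auto
  next
    fix u assume u: "u \<in> (V1 \<inter> V2) \<inter> YY"
    then obtain x where ux: "u = (x, 0)" and xT: "x \<in> T" using YY_elem by blast
    have "u \<in> V1" using u by blast
    then have "lt (t, -1) u" unfolding V1_def by blast
    then have p1: "prec t x \<or> t = x" unfolding lt_def ux by simp
    have "u \<in> V2" using u by blast
    then obtain w where w: "w \<in> LL" "fst w \<in> wedge T t" "lt u w" unfolding V2_def by blast
    have "prec x (fst w) \<or> x = fst w \<and> 0 < snd w" using w(3) unfolding lt_def ux by simp
    then have p2: "prec x (fst w) \<or> x = fst w" by blast
    have wT: "fst w \<in> T" and tw: "t \<le> fst w" using w(2) unfolding wedge_def by blast+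
    have "t \<le> x" using convex[OF tT xT wT tw p1 p2] .
    then have "x \<in> wedge T t" using xT unfolding wedge_def by blast
    then show "u \<in> fst -` wedge T t \<inter> YY" using u ux by simp
  qed
  have o12: "openin OT (V1 \<inter> V2)" using o1 o2 by (rule openin_Int)
  show ?thesis unfolding openin_subtopology
    by (rule exI[of _ "V1 \<inter> V2"]) (use eq o12 in simp)
qed

lemma open_pre_cowedge:
  assumes tT: "t \<in> T"
  shows "openin (subtopology OT YY) (fst -` (T - wedge T t) \<inter> YY)"
proof -
  define V1 where "V1 = {u\<in>LL. lt u (t, -1)}"
  define V2 where "V2 = \<Union>{{u\<in>LL. lt (w, -1) u} | w. w \<in> T \<and> w \<notin> wedge T t \<and> prec t w}"
  have t1: "(t, -1) \<in> LL" using tT Tpt_LL by auto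
  have o1: "openin OT V1" unfolding V1_def by (rule ray_below_open[OF t1])
  have o2: "openin OT V2" unfolding V2_def
    by (rule openin_Union) (use ray_above_open Tpt_LL in auto)
  have eq: "fst -` (T - wedge T t) \<inter> YY = (V1 \<union> V2) \<inter> YY"
  proof (intro set_eqI iffI)
    fix u assume u: "u \<in> fst -` (T - wedge T t) \<inter> YY"
    then obtain x where ux: "u = (x, 0)" and xT: "x \<in> T" using YY_elem by blast
    have xw: "x \<notin> wedge T t" using u ux by auto
    then have "x \<noteq> t" using tT by (auto simp: wedge_def)
    have uL: "u \<in> LL" using u YY_LL by auto
    have "prec x t \<or> prec t x" using prec_total[OF xT tT \<open>x \<noteq> t\<close>] .
    then show "u \<in> (V1 \<union> V2) \<inter> YY"
    proof
      assume "prec x t"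
      then have "u \<in> V1" unfolding V1_def lt_def ux using uL ux by auto
      then show ?thesis using u by auto
    next
      assume "prec t x"
      moreover have "lt (x, -1) u" unfolding lt_def ux by simp
      ultimately have "u \<in> V2" unfolding V2_def using uL xT xw by blast
      then show ?thesis using u by auto
    qed
  next
    fix u assume u: "u \<in> (V1 \<union> V2) \<inter> YY"
    then obtain x where ux: "u = (x, 0)" and xT: "x \<in> T" using YY_elem by blast
    have "x \<notin> wedge T t"
    proof
      assume "x \<in> wedge T t"
      then have tx: "t \<le> x" by (auto simp: wedge_def)
      show False
      proof (cases "u \<in> V1")
        case True
        then have "lt u (t, -1)" unfolding V1_def by blast
        then have "prec x t \<or> x = t \<and> (0::int) < -1" unfolding lt_def ux by simp
        then have "prec x t" by simp
        moreover have "prec t x \<or> t = x" using tx unfolding prec_def using order.order_iff_strict by blast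
        ultimately show False using prec_asym[OF xT tT] prec_irrefl[OF xT] by blast
      next
        case False
        then have "u \<in> V2" using u by blast
        then obtain w where w: "w \<in> T" "w \<notin> wedge T t" "prec t w" "lt (w, -1) u"
          unfolding V2_def by blast
        have "prec w x \<or> w = x \<and> (-1::int) < 0" using w(4) unfolding lt_def ux by simp
        then have "prec w x \<or> w = x" by blast
        then have "t \<le> w" using convex[OF tT w(1) xT tx] w(3) by blast
        then show False using w(1,2) by (auto simp: wedge_def)
      qed
    qed
    then show "u \<in> fst -` (T - wedge T t) \<inter> YY" using u ux xT by auto
  qed
  have o12: "openin OT (V1 \<union> V2)" using o1 o2 by (rule openin_Un)
  show ?thesis unfolding openin_subtopology
    by (rule exI[of _ "V1 \<union> V2"]) (use eq o12 in simp)
qed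

lemma cont_g: "continuous_map (subtopology OT YY) FW fst"
  unfolding fine_wedge_topology_def
proof (rule continuous_on_generated_topo)
  show "fst ` topspace (subtopology OT YY) \<subseteq> \<Union>(wedge T ` T \<union> (\<lambda>t. T - wedge T t) ` T)"
  proof
    fix x assume "x \<in> fst ` topspace (subtopology OT YY)"
    then have "x \<in> T" using topspace_sub unfolding YY_def by auto
    then have "x \<in> wedge T x" by (auto simp: wedge_def)
    then show "x \<in> \<Union>(wedge T ` T \<union> (\<lambda>t. T - wedge T t) ` T)" using \<open>x \<in> T\<close> by blast
  qed
next
  fix U assume "U \<in> wedge T ` T \<union> (\<lambda>t. T - wedge T t) ` T"
  then consider t where "t \<in> T" "U = wedge T t" | t where "t \<in> T" "U = T - wedge T t" by blast
  then show "openin (subtopology OT YY) (fst -` U \<inter> topspace (subtopology OT YY))"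
  proof cases
    case 1 then show ?thesis unfolding topspace_sub using open_pre_wedge by simp
  next
    case 2 then show ?thesis unfolding topspace_sub using open_pre_cowedge by simp
  qed
qed

lemma main: "suborderable_in TYPE('a \<times> int) FW"
proof -
  have hm: "homeomorphic_maps FW (subtopology OT YY) (\<lambda>x. (x, 0)) fst"
    unfolding homeomorphic_maps_def
  proof (intro conjI)
    show "continuous_map FW (subtopology OT YY) (\<lambda>x. (x, 0))"
      by (rule continuous_map_into_subtopology[OF cont_f]) (auto simp: topspace_FW YY_def)
    show "continuous_map (subtopology OT YY) FW fst" by (rule cont_g)
    show "\<forall>x\<in>topspace FW. fst (x, 0::int) = x" by simp
    show "\<forall>y\<in>topspace (subtopology OT YY). (fst y, 0) = y"
    proof
      fix y assume "y \<in> topspace (subtopology OT YY)"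
      then have "y \<in> YY" using topspace_sub by simp
      then show "(fst y, 0) = y" unfolding YY_def by auto
    qed
  qed
  have "FW homeomorphic_space subtopology OT YY"
    unfolding homeomorphic_space_def using hm by (intro exI)
  then show ?thesis unfolding suborderable_in_def
    using linear YY_LL by (intro exI conjI)
qed

end

theorem theorem3p12:
  fixes T :: "'a::order set"
  assumes "is_tree T"
    and "\<forall>t\<in>T. countable (immediate_successors T t)"
  shows "suborderable_in TYPE('a \<times> int) (fine_wedge_topology T)"
proof -
  obtain W :: "'a rel" where W: "Well_order W" "Field W = UNIV" using well_ordering[where 'a='a] by (elim exE conjE)
  have "linear_order_on (Field W) W" using W(1) unfolding well_order_on_def by blast
  then have "linear_order_on UNIV W" using W(2) by metis
  then have W1: "total_on UNIV W" and W2: "trans W" and W3: "antisym W"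
    unfolding linear_order_on_def partial_order_on_def preorder_on_def by blast+
  interpret ftree T W by (rule ftree.intro[OF assms(1) assms(2) W1 W2 W3])
  show ?thesis by (rule main)
qed


end
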